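(* Let $\varphi:\mathbb{R}^n\times\mathbb{R}^m\to\mathbb{R}\cup\{+\infty\}$ be a closed proper convex function and define $L(x,\lambda)=\inf_u\{\varphi(x,u)-\langle\lambda,u\rangle\}$. Let $H\in\mathbb{R}^{m\times m}$ be symmetric positive definite, let $(a_k),(c_k)$ be positive and $(b_k)$ nonnegative real sequences, let $\lambda_0\in\mathbb{R}^m$, $z_0=\lambda_0$, and for $k\geqslant0$ let $$\tilde\lambda_{k+1}=\frac{1}{b_k+1}z_k+\frac{b_k}{b_k+1}\lambda_k,$$ $$(x_{k+1},u_{k+1})\in\arg\min_{x,u}\Big\{\varphi(x,u)-\langle\tilde\lambda_{k+1},u\rangle+\frac{c_k}{2(b_k+1)}\|u\|_H^2\Big\},$$ $$\lambda_{k+1}=\tilde\lambda_{k+1}-\frac{c_k}{b_k+1}Hu_{k+1},\qquad z_{k+1}=z_k+\frac{a_k}{c_k}(b_k+1)H(\lambda_{k+1}-\tilde\lambda_{k+1}),$$ where the minimizers are assumed to exist. Then for every $k\geqslant1$, $$\min_xL(x,\lambda_k)=L(x_k,\lambda_k)=\varphi(x_k,u_k)-\langle\lambda_k,u_k\rangle.$$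
   Context: $\|u\|_H^2=u^{\mathrm T}Hu$. *)

theory Defs
  imports "HOL-Analysis.Analysis"
begin

definition epigraph_e :: "('a \<Rightarrow> ereal) \<Rightarrow> ('a \<times> real) set" where
  "epigraph_e f = {(p, t). f p \<le> ereal t}"

definition proper_fun :: "('a \<Rightarrow> ereal) \<Rightarrow> bool" where
  "proper_fun f \<longleftrightarrow> (\<forall>p. f p \<noteq> -\<infinity>) \<and> (\<exists>p. f p \<noteq> \<infinity>)"

definition convex_fun_e :: "('a::real_vector \<Rightarrow> ereal) \<Rightarrow> bool" where
  "convex_fun_e f \<longleftrightarrow> convex (epigraph_e f)"

definition closed_fun_e :: "('a::topological_space \<Rightarrow> ereal) \<Rightarrow> bool" where
  "closed_fun_e f \<longleftrightarrow> closed (epigraph_e f)"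

definition Lagr :: "('a \<times> 'b::real_inner \<Rightarrow> ereal) \<Rightarrow> 'a \<Rightarrow> 'b \<Rightarrow> ereal" where
  "Lagr \<phi> x lam = (INF u. \<phi> (x, u) - ereal (lam \<bullet> u))"

definition sym_pos_def :: "real^'m^'m \<Rightarrow> bool" where
  "sym_pos_def H \<longleftrightarrow> transpose H = H \<and> (\<forall>u. u \<noteq> 0 \<longrightarrow> u \<bullet> (H *v u) > 0)"

end

theory Submission
  imports Defs
begin

lemma sym_dot:
  fixes H :: "real^'m^'m"
  assumes "transpose H = H"
  shows "v \<bullet> (H *v w) = w \<bullet> (H *v v)"
proof -
  have "v \<bullet> (H *v w) = (v v* H) \<bullet> w" by (simp add: dot_lmul_matrix)
  also have "v v* H = transpose H *v v" by (simp add: vector_transpose_matrix)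
  finally show ?thesis using assms by (simp add: inner_commute)
qed

lemma pos_lim:
  fixes C D :: real
  assumes "\<And>t. 0 < t \<Longrightarrow> t \<le> 1 \<Longrightarrow> 0 \<le> C + t * D"
  shows "0 \<le> C"
proof (rule ccontr)
  assume C: "\<not> 0 \<le> C"
  show False
  proof (cases "D \<le> 0")
    case True
    then show False using assms[of 1] C by simp
  next
    case False
    define t where "t = min 1 (-C/(2*D))"
    have t0: "0 < t" using C False by (simp add: t_def divide_neg_pos)
    have t1: "t \<le> 1" by (simp add: t_def)
    have "t * D \<le> (-C/(2*D)) * D" using False by (intro mult_right_mono) (auto simp: t_def)
    also have "\<dots> = -C/2" using False by (simp add: field_simps)
    finally show False using assms[OF t0 t1] C by simp
  qed
qed

lemma key:
  fixes \<phi> :: "('n::real_vector) \<times> (real^'m) \<Rightarrow> ereal"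
    and H :: "real^'m^'m"
  assumes conv: "convex (epigraph_e \<phi>)" and prp: "proper_fun \<phi>"
    and Hs: "transpose H = H"
    and am: "\<And>x' u'. \<phi> (xk, uk) - ereal (mu \<bullet> uk) + ereal (s / 2 * (uk \<bullet> (H *v uk)))
        \<le> \<phi> (x', u') - ereal (mu \<bullet> u') + ereal (s / 2 * (u' \<bullet> (H *v u')))"
  shows "\<phi> (xk, uk) - ereal ((mu - s *\<^sub>R (H *v uk)) \<bullet> uk) \<le> \<phi> (x', u') - ereal ((mu - s *\<^sub>R (H *v uk)) \<bullet> u')"
proof -
  let ?l = "mu - s *\<^sub>R (H *v uk)"
  have ninf: "\<And>p. \<phi> p \<noteq> -\<infinity>" using prp unfolding proper_fun_def by blast
  obtain p0 where p0: "\<phi> p0 \<noteq> \<infinity>" using prp by (auto simp: proper_fun_def)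
  have "\<phi> (xk, uk) \<noteq> \<infinity>"
  proof
    assume h: "\<phi> (xk, uk) = \<infinity>"
    have "\<phi> (fst p0, snd p0) \<noteq> \<infinity>" using p0 by simp
    moreover have "\<phi> (fst p0, snd p0) \<noteq> -\<infinity>" using ninf by blast
    ultimately show False using am[of "fst p0" "snd p0"] h by (cases "\<phi> p0") auto
  qed
  then obtain B where B: "\<phi> (xk, uk) = ereal B" using ninf[of "(xk,uk)"] by (cases "\<phi> (xk, uk)") auto
  show ?thesis
  proof (cases "\<phi> (x', u') = \<infinity>")
    case True then show ?thesis using B by simp
  next
    case False
    then obtain A where A: "\<phi> (x', u') = ereal A" using ninf[of "(x',u')"] by (cases "\<phi> (x', u')") auto
    define d where "d = u' - uk"
    define C where "C = A - B - mu \<bullet> d + s * ((H *v uk) \<bullet> d)"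
    define D where "D = s / 2 * (d \<bullet> (H *v d))"
    have "0 \<le> C + t * D" if t0: "0 < t" and t1: "t \<le> 1" for t
    proof -
      define xt where "xt = (1 - t) *\<^sub>R xk + t *\<^sub>R x'"
      define ut where "ut = (1 - t) *\<^sub>R uk + t *\<^sub>R u'"
      have ut: "ut = uk + t *\<^sub>R d" by (simp add: ut_def d_def algebra_simps)
      have e1: "((xk, uk), B) \<in> epigraph_e \<phi>" using B by (simp add: epigraph_e_def)
      have e2: "((x', u'), A) \<in> epigraph_e \<phi>" using A by (simp add: epigraph_e_def)
      have "(1 - t) *\<^sub>R ((xk, uk), B) + t *\<^sub>R ((x', u'), A) \<in> epigraph_e \<phi>"
        using convexD[OF conv e1 e2, of "1 - t" t] t0 t1 by simp
      hence le: "\<phi> (xt, ut) \<le> ereal ((1 - t) * B + t * A)"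
        by (simp add: epigraph_e_def xt_def ut_def)
      obtain V where V: "\<phi> (xt, ut) = ereal V" using le ninf[of "(xt,ut)"] by (cases "\<phi> (xt, ut)") auto
      have "B - mu \<bullet> uk + s / 2 * (uk \<bullet> (H *v uk)) \<le> V - mu \<bullet> ut + s / 2 * (ut \<bullet> (H *v ut))"
        using am[of xt ut] B V by simp
      moreover have "V \<le> (1 - t) * B + t * A" using le V by simp
      moreover have "ut \<bullet> (H *v ut) = uk \<bullet> (H *v uk) + 2 * t * ((H *v uk) \<bullet> d) + t * t * (d \<bullet> (H *v d))"
        using sym_dot[OF Hs, of uk d]
        by (simp add: ut matrix_vector_right_distrib matrix_vector_mult_scaleR inner_add_left inner_add_right inner_commute algebra_simps)
      moreover have "mu \<bullet> ut = mu \<bullet> uk + t * (mu \<bullet> d)" by (simp add: ut inner_add_right)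
      ultimately have "0 \<le> t * (C + t * D)"
        by (simp add: C_def D_def algebra_simps)
      then show ?thesis using t0 by (simp add: zero_le_mult_iff)
    qed
    hence "0 \<le> C" by (rule pos_lim)
    moreover have "?l \<bullet> d = mu \<bullet> d - s * ((H *v uk) \<bullet> d)" by (simp add: inner_diff_left)
    ultimately show ?thesis using A B by (simp add: C_def d_def inner_diff_right)
  qed
qed

theorem lemma2:
  fixes \<phi> :: "(real^'nx) \<times> (real^'mu) \<Rightarrow> ereal"
    and H :: "real^'mu^'mu"
    and a b c :: "nat \<Rightarrow> real"
    and lam lamt z u :: "nat \<Rightarrow> real^'mu"
    and x :: "nat \<Rightarrow> real^'nx"
  assumes phi: "closed_fun_e \<phi>" "proper_fun \<phi>" "convex_fun_e \<phi>"
    and H: "sym_pos_def H"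
    and a: "\<And>k. a k > 0" and c: "\<And>k. c k > 0" and b: "\<And>k. b k \<ge> 0"
    and z0: "z 0 = lam 0"
    and lamt: "\<And>k. lamt (Suc k) = (1 / (b k + 1)) *\<^sub>R z k + (b k / (b k + 1)) *\<^sub>R lam k"
    and argmin: "\<And>k x' u'.
        \<phi> (x (Suc k), u (Suc k)) - ereal (lamt (Suc k) \<bullet> u (Suc k))
          + ereal (c k / (2 * (b k + 1)) * (u (Suc k) \<bullet> (H *v u (Suc k))))
        \<le> \<phi> (x', u') - ereal (lamt (Suc k) \<bullet> u')
          + ereal (c k / (2 * (b k + 1)) * (u' \<bullet> (H *v u')))"
    and lamupd: "\<And>k. lam (Suc k) = lamt (Suc k) - (c k / (b k + 1)) *\<^sub>R (H *v u (Suc k))"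
    and zupd: "\<And>k. z (Suc k) = z k + (a k / c k * (b k + 1)) *\<^sub>R (H *v (lam (Suc k) - lamt (Suc k)))"
    and k: "k \<ge> 1"
  shows "(INF x'. Lagr \<phi> x' (lam k)) = Lagr \<phi> (x k) (lam k)
       \<and> Lagr \<phi> (x k) (lam k) = \<phi> (x k, u k) - ereal (lam k \<bullet> u k)"
proof -
  obtain j where kj: "k = Suc j" using k by (cases k) auto
  let ?s = "c j / (b j + 1)"
  have am: "\<And>x' u'. \<phi> (x k, u k) - ereal (lamt k \<bullet> u k) + ereal (?s / 2 * (u k \<bullet> (H *v u k)))
        \<le> \<phi> (x', u') - ereal (lamt k \<bullet> u') + ereal (?s / 2 * (u' \<bullet> (H *v u')))"
    using argmin[of j] unfolding kj by (simp add: field_simps)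
  have G: "\<phi> (x k, u k) - ereal (lam k \<bullet> u k) \<le> \<phi> (x', u') - ereal (lam k \<bullet> u')" for x' u'
    using key[OF phi(3)[unfolded convex_fun_e_def] phi(2) H[unfolded sym_pos_def_def, THEN conjunct1] am, of x' u']
    unfolding kj lamupd by simp
  let ?G = "\<phi> (x k, u k) - ereal (lam k \<bullet> u k)"
  have L: "Lagr \<phi> (x k) (lam k) = ?G"
    unfolding Lagr_def
  proof (rule antisym)
    show "(INF u'. \<phi> (x k, u') - ereal (lam k \<bullet> u')) \<le> ?G" using INF_lower[of "u k" UNIV "\<lambda>u'. \<phi> (x k, u') - ereal (lam k \<bullet> u')"] by simp
    show "?G \<le> (INF u'. \<phi> (x k, u') - ereal (lam k \<bullet> u'))" by (rule INF_greatest) (rule G)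
  qed
  have "(INF x'. Lagr \<phi> x' (lam k)) = ?G"
  proof (rule antisym)
    show "(INF x'. Lagr \<phi> x' (lam k)) \<le> ?G" using INF_lower[of "x k" UNIV "\<lambda>x'. Lagr \<phi> x' (lam k)"] L by simp
    show "?G \<le> (INF x'. Lagr \<phi> x' (lam k))" unfolding Lagr_def by (intro INF_greatest) (rule G)
  qed
  with L show ?thesis by simp
qed

end
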